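(* Let $(G,\alpha)$ be an edge-labeled graph with $n$ vertices $v_1,\dots,v_n$ over $\mathbb{Z}/m\mathbb{Z}$ and let $1<i\le n$. Let $f=\big[\bigcup_{k=1}^{i-1}\{(p^{(i,k)})\}\big]$ be the least common multiple of the greatest common divisors of all $v_k$-trails of $v_i$, over $k=1,\dots,i-1$, and suppose $f\not\equiv 0\pmod m$. Then there exists an $i$-th flow-up class $\bar F^{(i)}=(\bar 0,\dots,\bar 0,\bar f^{(i)}_{v_i},\dots,\bar f^{(i)}_{v_n})\in\mathcal F_i$ (so $\bar f^{(i)}_{v_j}=\bar 0$ for all $j<i$) with $\bar f^{(i)}_{v_i}=f+m\mathbb{Z}$.
   Context: Let $m\ge 2$ and $G=(V,E)$ a finite simple connected graph with ordered vertices $v_1,\dots,v_n$. An edge-labeling $\alpha$ assigns to each edge a nonzero ideal of $\mathbb{Z}/m\mathbb{Z}$; each edge $e$ is labeled by the ideal $\alpha(e)=\langle l_e+m\mathbb{Z}\rangle$ generated by the class of a positive integer $l_e$, the integer representative (smallest positive integer of the coset) of the label. A spline on $(G,\alpha)$ is $F=(f_{v_1},\dots,f_{v_n})\in(\mathbb{Z}/m\mathbb{Z})^n$ with $f_{v_a}-f_{v_b}\in\alpha(v_av_b)$ for each edge $v_av_b$. An $i$-th flow-up class is a spline with $f_{v_i}\ne0$ and $f_{v_t}=0$ for $t<i$; $\mathcal F_i$ is the set of these. A trail is a sequence of vertices and edges, consecutive vertices joined by the listed edge, in which no edge is repeated; a $v_k$-trail of $v_i$ is a trail from $v_i$ to $v_k$.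 For such a trail $p^{(i,k)}$, $(p^{(i,k)})$ is the gcd (in $\mathbb{Z}$) of the integer representatives $l_e$ of its edges; $\{(p^{(i,k)})\}$ is the set of these over all $v_k$-trails of $v_i$; $[\,S\,]$ denotes the least common multiple of a finite set $S$ of integers. *)

theory Defs
  imports "HOL-Number_Theory.Cong"
begin

text \<open>Vertices are v_1..v_n, encoded as the natural numbers 1..n.
  The edge relation E is a symmetric irreflexive relation on {1..n};
  the label of edge {a,b} is given by its integer representative l a b
  (smallest positive element of the coset), so 0 < l a b < m.
  Elements of Z/mZ are represented by integers modulo m.\<close>

definition simple_graph :: "nat \<Rightarrow> (nat \<Rightarrow> nat \<Rightarrow> bool) \<Rightarrow> bool" where
  "simple_graph n E \<longleftrightarrow>
     (\<forall>a b. E a b \<longrightarrow> a \<in> {1..n} \<and> b \<in> {1..n}) \<and>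
     (\<forall>a b. E a b \<longrightarrow> E b a) \<and> (\<forall>a. \<not> E a a)"

definition connected_graph :: "nat \<Rightarrow> (nat \<Rightarrow> nat \<Rightarrow> bool) \<Rightarrow> bool" where
  "connected_graph n E \<longleftrightarrow> (\<forall>a\<in>{1..n}. \<forall>b\<in>{1..n}. E\<^sup>*\<^sup>* a b)"

definition edge_labeling :: "nat \<Rightarrow> (nat \<Rightarrow> nat \<Rightarrow> bool) \<Rightarrow> (nat \<Rightarrow> nat \<Rightarrow> nat) \<Rightarrow> bool" where
  "edge_labeling m E l \<longleftrightarrow> (\<forall>a b. E a b \<longrightarrow> l a b = l b a \<and> 0 < l a b \<and> l a b < m)"

definition is_spline :: "nat \<Rightarrow> nat \<Rightarrow> (nat \<Rightarrow> nat \<Rightarrow> bool) \<Rightarrow> (nat \<Rightarrow> nat \<Rightarrow> nat) \<Rightarrow> (nat \<Rightarrow> int) \<Rightarrow> bool" where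
  "is_spline m n E l F \<longleftrightarrow>
     (\<forall>a b. E a b \<longrightarrow> (\<exists>c::int. [F a - F b = c * int (l a b)] (mod int m)))"

definition flow_up_class :: "nat \<Rightarrow> nat \<Rightarrow> (nat \<Rightarrow> nat \<Rightarrow> bool) \<Rightarrow> (nat \<Rightarrow> nat \<Rightarrow> nat) \<Rightarrow> nat \<Rightarrow> (nat \<Rightarrow> int) \<Rightarrow> bool" where
  "flow_up_class m n E l i F \<longleftrightarrow>
     is_spline m n E l F \<and> \<not> [F i = 0] (mod int m) \<and>
     (\<forall>t\<in>{1..<i}. [F t = 0] (mod int m))"

text \<open>A trail is given by its vertex sequence; consecutive vertices are adjacent and
  no edge (unordered pair) is used twice.\<close>
definition trail_edges :: "nat list \<Rightarrow> (nat \<times> nat) list" where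
  "trail_edges vs = zip vs (tl vs)"

definition is_trail :: "nat \<Rightarrow> (nat \<Rightarrow> nat \<Rightarrow> bool) \<Rightarrow> nat list \<Rightarrow> nat \<Rightarrow> nat \<Rightarrow> bool" where
  "is_trail n E vs a b \<longleftrightarrow>
     vs \<noteq> [] \<and> hd vs = a \<and> last vs = b \<and> set vs \<subseteq> {1..n} \<and>
     (\<forall>(x,y)\<in>set (trail_edges vs). E x y) \<and>
     distinct (map (\<lambda>(x,y). {x,y}) (trail_edges vs))"

definition trail_gcd :: "(nat \<Rightarrow> nat \<Rightarrow> nat) \<Rightarrow> nat list \<Rightarrow> nat" where
  "trail_gcd l vs = Gcd ((\<lambda>(x,y). l x y) ` set (trail_edges vs))"

definition trail_gcds :: "nat \<Rightarrow> (nat \<Rightarrow> nat \<Rightarrow> bool) \<Rightarrow> (nat \<Rightarrow> nat \<Rightarrow> nat) \<Rightarrow> nat \<Rightarrow> nat \<Rightarrow> nat set" where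
  "trail_gcds n E l i k = {trail_gcd l vs | vs. is_trail n E vs i k}"

definition flow_lcm :: "nat \<Rightarrow> (nat \<Rightarrow> nat \<Rightarrow> bool) \<Rightarrow> (nat \<Rightarrow> nat \<Rightarrow> nat) \<Rightarrow> nat \<Rightarrow> nat" where
  "flow_lcm n E l i = Lcm (\<Union>k\<in>{1..<i}. trail_gcds n E l i k)"

end

theory Submission
  imports Defs "HOL-Computational_Algebra.Primes"
begin

lemma walk_to_path:
  assumes "R\<^sup>*\<^sup>* a b" "b \<in> V" "\<forall>x y. R x y \<longrightarrow> x \<in> V \<and> y \<in> V"
  shows "\<exists>vs. vs \<noteq> [] \<and> hd vs = a \<and> last vs = b \<and> set vs \<subseteq> V \<and> successively R vs \<and> distinct vs"
  using assms(1)
proof (induction rule: converse_rtranclp_induct)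
  case base
  then show ?case using assms(2) by (intro exI[of _ "[b]"]) auto
next
  case (step a c)
  then obtain vs where vs: "vs \<noteq> []" "hd vs = c" "last vs = b" "set vs \<subseteq> V" "successively R vs" "distinct vs"
    by blast
  show ?case
  proof (cases "a \<in> set vs")
    case True
    then obtain ys zs where eq: "vs = ys @ a # zs" by (meson split_list)
    show ?thesis
      apply (intro exI[of _ "a # zs"])
      using vs eq successively_append_iff[of R ys "a # zs"] by auto
  next
    case False
    have "a \<in> V" using step(1) assms(3) by blast
    then show ?thesis
      apply (intro exI[of _ "a # vs"])
      using vs False step(1) by (auto simp: successively_Cons)
  qed
qed

lemma succ_zip: "successively R vs \<Longrightarrow> \<forall>(x,y)\<in>set (zip vs (tl vs)). R x y"
  by (induction vs rule: induct_list012) auto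

lemma distinct_edges: "distinct vs \<Longrightarrow> distinct (map (\<lambda>(x,y). {x,y}) (zip vs (tl vs)))"
proof (induction vs rule: induct_list012)
  case (3 x y zs)
  have "{x,y} \<notin> (\<lambda>(x,y). {x,y}) ` set (zip (y # zs) zs)"
  proof
    assume "{x,y} \<in> (\<lambda>(x,y). {x,y}) ` set (zip (y # zs) zs)"
    then obtain u w where uw: "(u,w) \<in> set (zip (y # zs) zs)" "{x,y} = {u,w}" by auto
    have "u \<in> set (y#zs)" "w \<in> set (y # zs)" using uw(1)
      by (auto dest: set_zip_leftD set_zip_rightD)
    moreover have "x = u \<or> x = w" using uw(2) by (metis doubleton_eq_iff)
    ultimately show False using "3.prems" by auto
  qed
  then show ?case using 3 by auto
qed auto


lemma spline_lin:
  assumes "is_spline m n E l F" "is_spline m n E l G"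
  shows "is_spline m n E l (\<lambda>v. c1 * F v + c2 * G v)"
  unfolding is_spline_def
proof (intro allI impI)
  fix a b assume e: "E a b"
  obtain u where u: "[F a - F b = u * int (l a b)] (mod int m)" using assms(1) e unfolding is_spline_def by blast
  obtain w where w: "[G a - G b = w * int (l a b)] (mod int m)" using assms(2) e unfolding is_spline_def by blast
  have "[c1 * (F a - F b) + c2 * (G a - G b) = c1 * (u * int (l a b)) + c2 * (w * int (l a b))] (mod int m)"
    using u w by (intro cong_add cong_mult) auto
  then have "[(c1 * F a + c2 * G a) - (c1 * F b + c2 * G b) = (c1 * u + c2 * w) * int (l a b)] (mod int m)"
    by (simp add: algebra_simps)
  then show "\<exists>c. [(c1 * F a + c2 * G a) - (c1 * F b + c2 * G b) = c * int (l a b)] (mod int m)" by blast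
qed

lemma path_dvd_flow:
  assumes "simple_graph n E" "(\<lambda>a b. E a b \<and> d dvd l a b)\<^sup>*\<^sup>* i k" "k \<in> {1..<i}" "i \<le> n"
  shows "d dvd flow_lcm n E l i"
proof -
  have V: "\<forall>x y. (\<lambda>a b. E a b \<and> d dvd l a b) x y \<longrightarrow> x \<in> {1..n} \<and> y \<in> {1..n}"
    using assms(1) unfolding simple_graph_def by blast
  have "k \<in> {1..n}" using assms(3,4) by auto
  from walk_to_path[OF assms(2) this V] obtain vs where vs: "vs \<noteq> []" "hd vs = i" "last vs = k"
    "set vs \<subseteq> {1..n}" "successively (\<lambda>a b. E a b \<and> d dvd l a b) vs" "distinct vs" by blast
  have z: "\<forall>(x,y)\<in>set (trail_edges vs). E x y \<and> d dvd l x y"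
    using succ_zip[OF vs(5)] unfolding trail_edges_def by simp
  have tr: "is_trail n E vs i k"
    unfolding is_trail_def using vs z distinct_edges[OF vs(6)] unfolding trail_edges_def by auto
  have "d dvd trail_gcd l vs"
    unfolding trail_gcd_def using z by (intro Gcd_greatest) auto
  moreover have "trail_gcd l vs \<in> (\<Union>k\<in>{1..<i}. trail_gcds n E l i k)"
    using tr assms(3) unfolding trail_gcds_def by blast
  ultimately show ?thesis unfolding flow_lcm_def by (meson dvd_Lcm dvd_trans)
qed

theorem mainTheorem3:
  fixes m n i :: nat and E :: "nat \<Rightarrow> nat \<Rightarrow> bool" and l :: "nat \<Rightarrow> nat \<Rightarrow> nat"
  assumes "m \<ge> 2"
    and "simple_graph n E" and "connected_graph n E"
    and "edge_labeling m E l"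
    and "1 < i" and "i \<le> n"
    and "\<not> [int (flow_lcm n E l i) = 0] (mod int m)"
  shows "\<exists>F. flow_up_class m n E l i F \<and> [F i = int (flow_lcm n E l i)] (mod int m)"
proof -
  define f where "f = flow_lcm n E l i"
  define Z where "Z = {F. is_spline m n E l F \<and> (\<forall>t\<in>{1..<i}. [F t = 0] (mod int m))}"
  have m0: "m \<noteq> 0" using assms(1) by auto
  have lin: "(\<lambda>v. c1 * F v + c2 * G v) \<in> Z" if "F \<in> Z" "G \<in> Z" for F G c1 c2
  proof -
    have "[c1 * F t + c2 * G t = c1 * 0 + c2 * 0] (mod int m)" if "t \<in> {1..<i}" for t
      using \<open>F \<in> Z\<close> \<open>G \<in> Z\<close> that unfolding Z_def by (intro cong_add cong_mult) auto
    then show ?thesis using that spline_lin unfolding Z_def by auto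
  qed
  have mZ: "(\<lambda>_. int m) \<in> Z" unfolding Z_def is_spline_def by (auto intro!: exI[of _ 0] simp: cong_iff_dvd_diff)
  define g where "g = (LEAST g::nat. g > 0 \<and> (\<exists>F\<in>Z. F i = int g))"
  have gP: "g > 0 \<and> (\<exists>F\<in>Z. F i = int g)"
    unfolding g_def by (rule LeastI[of _ m]) (use mZ m0 in auto)
  then obtain G where G: "G \<in> Z" "G i = int g" by blast
  have gdvd: "int g dvd F0 i" if "F0 \<in> Z" for F0
  proof (rule ccontr)
    assume nd: "\<not> int g dvd F0 i"
    define H where "H = (\<lambda>v. 1 * F0 v + (- (F0 i div int g)) * G v)"
    have "H \<in> Z" unfolding H_def using lin that G by blast
    moreover have "H i = F0 i mod int g" unfolding H_def using G by (simp add: minus_div_mult_eq_mod algebra_simps)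
    moreover have "F0 i mod int g > 0" using nd gP
      by (metis dvd_eq_mod_eq_0 order_le_less pos_mod_sign of_nat_0_less_iff)
    moreover have "F0 i mod int g < int g" using gP by simp
    ultimately have "nat (F0 i mod int g) > 0 \<and> (\<exists>F\<in>Z. F i = int (nat (F0 i mod int g)))"
      "nat (F0 i mod int g) < g" by (auto intro!: bexI[of _ H])
    then show False using not_less_Least[of "nat (F0 i mod int g)" "\<lambda>g. g > 0 \<and> (\<exists>F\<in>Z. F i = int g)"] unfolding g_def[symmetric] by blast
  qed
  have gf: "g dvd f"
  proof (rule ccontr)
    assume ngf: "\<not> g dvd f"
    have f0: "f \<noteq> 0" using assms(7) unfolding f_def by (metis cong_refl of_nat_0)
    obtain p where p: "prime p" "multiplicity p f < multiplicity p g"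
      using multiplicity_le_imp_dvd[of g f] ngf gP by (metis not_le less_not_refl)
    define a where "a = multiplicity p g"
    have pa_g: "p ^ a dvd g" unfolding a_def by (rule multiplicity_dvd)
    have npu: "\<not> is_unit p" using p(1) by auto
    have pa_f: "\<not> p ^ a dvd f" using power_dvd_iff_le_multiplicity[OF f0 npu] p(2) a_def by auto
    have a1: "a \<ge> 1" using p(2) a_def by auto
    have "int g dvd int m" using gdvd[OF mZ] by simp
    then have gm: "g dvd m" by simp
    define s where "s = multiplicity p m"
    have as: "a \<le> s" unfolding a_def s_def using gm m0 by (rule dvd_imp_multiplicity_le)
    define r where "r = m div p ^ s"
    have mr: "m = p ^ s * r" unfolding r_def s_def by (simp add: multiplicity_dvd)
    have npr: "\<not> p dvd r" unfolding r_def s_def using multiplicity_decompose[OF m0 npu] by simp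
    have r0: "r \<noteq> 0" using mr m0 by auto
    define x where "x = p ^ (a - 1) * r"
    have p0: "p \<noteq> 0" using p(1) by auto
    have x0: "x \<noteq> 0" unfolding x_def using r0 p0 by simp
    have mpx: "multiplicity p x = a - 1"
      unfolding x_def by (rule multiplicity_decomposeI[OF refl npr p0])
    have npx: "\<not> p ^ a dvd x" using power_dvd_iff_le_multiplicity[OF x0 npu] mpx a1 by auto
    have key: "gcd L m dvd x" if L: "0 < L" "\<not> p ^ a dvd L" for L
    proof (rule multiplicity_le_imp_dvd)
      show "gcd L m \<noteq> 0" using m0 by simp
      fix q :: nat assume q: "prime q"
      show "multiplicity q (gcd L m) \<le> multiplicity q x"
      proof (cases "q = p")
        case True
        have "multiplicity p (gcd L m) \<le> multiplicity p L"
          using L by (intro dvd_imp_multiplicity_le) auto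
        moreover have "multiplicity p L < a"
          using power_dvd_iff_le_multiplicity[of L p a] L npu by auto
        ultimately show ?thesis using True mpx by auto
      next
        case False
        have "multiplicity q (gcd L m) \<le> multiplicity q m"
          using m0 by (intro dvd_imp_multiplicity_le) auto
        also have "multiplicity q m = multiplicity q r"
          unfolding mr using prime_elem_multiplicity_mult_distrib[of q "p ^ s" r] q p0 r0
            multiplicity_distinct_prime_power[OF q p(1) False] by simp
        also have "\<dots> = multiplicity q x"
          unfolding x_def using prime_elem_multiplicity_mult_distrib[of q "p ^ (a - 1)" r] q p0 r0
            multiplicity_distinct_prime_power[OF q p(1) False] by simp
        finally show ?thesis .
      qed
    qed
    define E' where "E' = (\<lambda>a' b. E a' b \<and> p ^ a dvd l a' b)"
    define S where "S = {v. E'\<^sup>*\<^sup>* i v}"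
    define F where "F = (\<lambda>v. if v \<in> S then int x else 0)"
    have cross: "\<exists>c. [int x = c * int (l a' b)] (mod int m)" if "E a' b" "\<not> p ^ a dvd l a' b" for a' b
    proof -
      have "0 < l a' b" using assms(4) that unfolding edge_labeling_def by blast
      from key[OF this that(2)] obtain k where k: "x = gcd (l a' b) m * k" by blast
      obtain u v where uv: "u * int (l a' b) + v * int m = gcd (int (l a' b)) (int m)"
        using bezout_int by blast
      have "int x = (u * int k) * int (l a' b) + (v * int k) * int m"
      proof -
        have "int x = int k * gcd (int (l a' b)) (int m)" using k by (simp add: gcd_int_int_eq)
        also have "\<dots> = int k * (u * int (l a' b) + v * int m)" using uv by simp
        finally show ?thesis by (simp add: algebra_simps)
      qed
      then have "[int x = (u * int k) * int (l a' b)] (mod int m)"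
        by (simp add: cong_iff_dvd_diff)
      then show ?thesis by blast
    qed
    have spl: "is_spline m n E l F"
      unfolding is_spline_def
    proof (intro allI impI)
      fix a' b assume e: "E a' b"
      have e2: "E b a'" using e assms(2) unfolding simple_graph_def by blast
      have lsym: "l b a' = l a' b" using e assms(4) unfolding edge_labeling_def by metis
      show "\<exists>c. [F a' - F b = c * int (l a' b)] (mod int m)"
      proof (cases "a' \<in> S \<longleftrightarrow> b \<in> S")
        case True
        then have "F a' = F b" unfolding F_def by simp
        then show ?thesis by (intro exI[of _ 0]) simp
      next
        case False
        then consider "a' \<in> S" "b \<notin> S" | "b \<in> S" "a' \<notin> S" by blast
        then show ?thesis
        proof cases
          case 1
          have "\<not> p ^ a dvd l a' b"
          proof
            assume "p ^ a dvd l a' b"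
            then have "E' a' b" unfolding E'_def using e by blast
            moreover have "E'\<^sup>*\<^sup>* i a'" using 1 unfolding S_def by simp
            ultimately have "E'\<^sup>*\<^sup>* i b" by (rule rtranclp.rtrancl_into_rtrancl[rotated])
            then show False using 1 unfolding S_def by simp
          qed
          from cross[OF e this] obtain c where "[int x = c * int (l a' b)] (mod int m)" by blast
          moreover have "F a' - F b = int x" using 1 unfolding F_def by simp
          ultimately show ?thesis by metis
        next
          case 2
          have "\<not> p ^ a dvd l a' b"
          proof
            assume "p ^ a dvd l a' b"
            then have "E' b a'" unfolding E'_def using e2 lsym by simp
            moreover have "E'\<^sup>*\<^sup>* i b" using 2 unfolding S_def by simp
            ultimately have "E'\<^sup>*\<^sup>* i a'" by (rule rtranclp.rtrancl_into_rtrancl[rotated])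
            then show False using 2 unfolding S_def by simp
          qed
          from cross[OF e this] obtain c where "[int x = c * int (l a' b)] (mod int m)" by blast
          then have "[- int x = (- c) * int (l a' b)] (mod int m)" by (simp add: cong_minus_minus_iff)
          moreover have "F a' - F b = - int x" using 2 unfolding F_def by simp
          ultimately show ?thesis by metis
        qed
      qed
    qed
    have zero: "F t = 0" if "t \<in> {1..<i}" for t
    proof -
      have "t \<notin> S"
      proof
        assume "t \<in> S"
        then have "E'\<^sup>*\<^sup>* i t" unfolding S_def by simp
        then have "p ^ a dvd flow_lcm n E l i"
          using path_dvd_flow[OF assms(2) _ that assms(6)] unfolding E'_def by blast
        then show False using pa_f unfolding f_def by simp
      qed
      then show ?thesis unfolding F_def by simp
    qed
    have "F \<in> Z" unfolding Z_def using spl zero by simp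
    moreover have "F i = int x" unfolding F_def S_def by simp
    ultimately have "int g dvd int x" using gdvd by metis
    then have "g dvd x" by simp
    then show False using pa_g npx dvd_trans by blast
  qed
  then obtain q where q: "f = g * q" by blast
  define F where "F = (\<lambda>v. int q * G v + 0 * G v)"
  have FZ: "F \<in> Z" unfolding F_def using lin G by blast
  have Fi: "F i = int f" unfolding F_def using G q by simp
  show ?thesis
    apply (intro exI[of _ F])
    using FZ Fi assms(7) unfolding Z_def flow_up_class_def f_def by auto
qed

end
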